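(* Let $k\ge1$. For every $\mathcal{C}_k$-algebra $(A,t)$: (i) every cyclic deductive system of $A$ is an intersection of maximal cyclic deductive systems of $A$; (ii) the intersection of all maximal cyclic deductive systems of $A$ equals $\{1\}$. Consequently, (iii) the variety of $\mathcal{C}_k$-algebras is semisimple (every subdirectly irreducible member is simple).
   Context: A modal pseudocomplemented De Morgan algebra ($mpM$-algebra) is an algebra $\langle A,\wedge,\vee,\sim,{}^\ast,0,1\rangle$ such that $\langle A,\wedge,\vee,\sim,0,1\rangle$ is a De Morgan algebra (bounded distributive lattice with $\sim\sim x=x$, $\sim(x\vee y)=\sim x\wedge\sim y$), $x^\ast$ is the pseudocomplement of $x$, and $x\vee\sim x\le x\vee x^\ast$. Put $\nabla x=\sim(\sim x\wedge x^\ast)$, $\triangle x=\sim\nabla\sim x$. A $\mathcal{C}_k$-algebra ($k\ge1$) is a pair $(A,t)$ with $A$ an $mpM$-algebra and $t$ an $mpM$-automorphism of $A$ with $t^k=\mathrm{id}$; these form a variety in the signature $(\wedge,\vee,\sim,{}^\ast,t,0,1)$. The cyclic implication is $a\rightharpoondown b=\bigvee_{i=1}^{k}\nabla(\sim t^i(a))\vee b$. A cyclic deductive system is a set $D\subseteq A$ with $1\in D$ such that $x,\,x\rightharpoondown y\in D$ imply $y\in D$; it is maximal if it is maximal among proper cyclic deductive systems. *)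

theory Defs
  imports Main
begin

text \<open>An algebra of signature (meet, join, neg, pc, t, zero, one) whose carrier is the
whole type 'a.\<close>

record 'a ck_algebra =
  meet :: "'a \<Rightarrow> 'a \<Rightarrow> 'a"
  join :: "'a \<Rightarrow> 'a \<Rightarrow> 'a"
  neg  :: "'a \<Rightarrow> 'a"
  pc   :: "'a \<Rightarrow> 'a"
  tr   :: "'a \<Rightarrow> 'a"
  zero :: 'a
  one  :: 'a

definition leq :: "'a ck_algebra \<Rightarrow> 'a \<Rightarrow> 'a \<Rightarrow> bool" where
  "leq A x y \<longleftrightarrow> meet A x y = x"

definition bdl :: "'a ck_algebra \<Rightarrow> bool" where
  "bdl A \<longleftrightarrow>
     (\<forall>x y z. meet A (meet A x y) z = meet A x (meet A y z)) \<and>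
     (\<forall>x y z. join A (join A x y) z = join A x (join A y z)) \<and>
     (\<forall>x y. meet A x y = meet A y x) \<and>
     (\<forall>x y. join A x y = join A y x) \<and>
     (\<forall>x y. meet A x (join A x y) = x) \<and>
     (\<forall>x y. join A x (meet A x y) = x) \<and>
     (\<forall>x y z. meet A x (join A y z) = join A (meet A x y) (meet A x z)) \<and>
     (\<forall>x. join A x (zero A) = x) \<and>
     (\<forall>x. meet A x (one A) = x)"

definition de_morgan_alg :: "'a ck_algebra \<Rightarrow> bool" where
  "de_morgan_alg A \<longleftrightarrow> bdl A \<and>
     (\<forall>x. neg A (neg A x) = x) \<and>
     (\<forall>x y. neg A (join A x y) = meet A (neg A x) (neg A y))"

definition is_pseudocomplement :: "'a ck_algebra \<Rightarrow> bool" where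
  "is_pseudocomplement A \<longleftrightarrow>
     (\<forall>x. meet A x (pc A x) = zero A \<and> (\<forall>y. meet A x y = zero A \<longrightarrow> leq A y (pc A x)))"

definition mpM_alg :: "'a ck_algebra \<Rightarrow> bool" where
  "mpM_alg A \<longleftrightarrow> de_morgan_alg A \<and> is_pseudocomplement A \<and>
     (\<forall>x. leq A (join A x (neg A x)) (join A x (pc A x)))"

definition mpM_automorphism :: "'a ck_algebra \<Rightarrow> ('a \<Rightarrow> 'a) \<Rightarrow> bool" where
  "mpM_automorphism A f \<longleftrightarrow> bij f \<and>
     (\<forall>x y. f (meet A x y) = meet A (f x) (f y)) \<and>
     (\<forall>x y. f (join A x y) = join A (f x) (f y)) \<and>
     (\<forall>x. f (neg A x) = neg A (f x)) \<and>
     (\<forall>x. f (pc A x) = pc A (f x)) \<and>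
     f (zero A) = zero A \<and> f (one A) = one A"

definition Ck_alg :: "nat \<Rightarrow> 'a ck_algebra \<Rightarrow> bool" where
  "Ck_alg k A \<longleftrightarrow> mpM_alg A \<and> mpM_automorphism A (tr A) \<and> (tr A ^^ k) = id"

definition nabla :: "'a ck_algebra \<Rightarrow> 'a \<Rightarrow> 'a" where
  "nabla A x = neg A (meet A (neg A x) (pc A x))"

definition bigjoin :: "'a ck_algebra \<Rightarrow> 'a list \<Rightarrow> 'a" where
  "bigjoin A xs = foldr (join A) xs (zero A)"

definition cimp :: "nat \<Rightarrow> 'a ck_algebra \<Rightarrow> 'a \<Rightarrow> 'a \<Rightarrow> 'a" where
  "cimp k A a b = join A (bigjoin A (map (\<lambda>i. nabla A (neg A ((tr A ^^ i) a))) [1..<Suc k])) b"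

definition cyclic_ds :: "nat \<Rightarrow> 'a ck_algebra \<Rightarrow> 'a set \<Rightarrow> bool" where
  "cyclic_ds k A D \<longleftrightarrow> one A \<in> D \<and> (\<forall>x y. x \<in> D \<longrightarrow> cimp k A x y \<in> D \<longrightarrow> y \<in> D)"

definition maximal_cyclic_ds :: "nat \<Rightarrow> 'a ck_algebra \<Rightarrow> 'a set \<Rightarrow> bool" where
  "maximal_cyclic_ds k A M \<longleftrightarrow> cyclic_ds k A M \<and> M \<noteq> UNIV \<and>
     (\<forall>D. cyclic_ds k A D \<and> D \<noteq> UNIV \<and> M \<subseteq> D \<longrightarrow> D = M)"

definition congruence :: "'a ck_algebra \<Rightarrow> ('a \<times> 'a) set \<Rightarrow> bool" where
  "congruence A \<theta> \<longleftrightarrow> equiv UNIV \<theta> \<and>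
     (\<forall>x y u v. (x, y) \<in> \<theta> \<longrightarrow> (u, v) \<in> \<theta> \<longrightarrow>
        (meet A x u, meet A y v) \<in> \<theta> \<and> (join A x u, join A y v) \<in> \<theta>) \<and>
     (\<forall>x y. (x, y) \<in> \<theta> \<longrightarrow>
        (neg A x, neg A y) \<in> \<theta> \<and> (pc A x, pc A y) \<in> \<theta> \<and> (tr A x, tr A y) \<in> \<theta>)"

definition nontrivial_alg :: "'a ck_algebra \<Rightarrow> bool" where
  "nontrivial_alg A \<longleftrightarrow> (\<exists>x y :: 'a. x \<noteq> y)"

definition subdirectly_irreducible :: "'a ck_algebra \<Rightarrow> bool" where
  "subdirectly_irreducible A \<longleftrightarrow> nontrivial_alg A \<and>
     \<Inter>{\<theta>. congruence A \<theta> \<and> \<theta> \<noteq> Id} \<noteq> Id"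

definition simple_alg :: "'a ck_algebra \<Rightarrow> bool" where
  "simple_alg A \<longleftrightarrow> nontrivial_alg A \<and>
     (\<forall>\<theta>. congruence A \<theta> \<longrightarrow> \<theta> = Id \<or> \<theta> = UNIV)"

end

theory Submission
  imports Defs
begin


locale mpm = L: distrib_lattice mt le lt jn + B: bounded_lattice mt le lt jn bt tp
  for mt (infixl "\<curlywedge>" 70) and le (infix "\<preceq>" 50) and lt and jn (infixl "\<curlyvee>" 65) and bt tp +
  fixes N P t :: "'a \<Rightarrow> 'a" and k :: nat
  assumes NN: "N (N x) = x" and Njn: "N (x \<curlyvee> y) = N x \<curlywedge> N y"
   and pc1: "x \<curlywedge> P x = bt" and pc2: "x \<curlywedge> y = bt \<Longrightarrow> y \<preceq> P x"
   and ax: "x \<curlyvee> N x \<preceq> x \<curlyvee> P x"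
   and tmt: "t (x \<curlywedge> y) = t x \<curlywedge> t y" and tjn: "t (x \<curlyvee> y) = t x \<curlyvee> t y"
   and tN: "t (N x) = N (t x)" and tP: "t (P x) = P (t x)"
   and tbt: "t bt = bt" and ttp: "t tp = tp"
   and tk: "(t ^^ k) x = x" and k1: "1 \<le> k"
begin

lemma Nmt: "N (x \<curlywedge> y) = N x \<curlyvee> N y"
proof -
  have "N (N x \<curlyvee> N y) = x \<curlywedge> y" by (simp add: Njn NN)
  then show ?thesis by (metis NN)
qed

lemma Nmono: "x \<preceq> y \<Longrightarrow> N y \<preceq> N x"
proof -
  assume "x \<preceq> y" then have "x \<curlyvee> y = y" using L.sup_absorb2 by blast
  then have "N y = N x \<curlywedge> N y" using Njn by metis
  then have "N y \<curlywedge> N x = N y" using L.inf.commute by metis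
  then show ?thesis using L.le_iff_inf by blast
qed

lemma Nle_iff: "N x \<preceq> N y \<longleftrightarrow> y \<preceq> x"
  using Nmono NN by metis

lemma Nbt: "N bt = tp"
proof -
  have "bt \<preceq> N tp" by simp
  then have "N (N tp) \<preceq> N bt" by (rule Nmono)
  then show ?thesis using NN B.top_unique by metis
qed

lemma Ntp: "N tp = bt"
  using Nbt NN by metis

lemma Panti: "x \<preceq> y \<Longrightarrow> P y \<preceq> P x"
proof -
  assume "x \<preceq> y"
  then have "x \<curlywedge> P y \<preceq> y \<curlywedge> P y" using L.inf_mono by blast
  then have "x \<curlywedge> P y = bt" using pc1 B.bot_unique by metis
  then show ?thesis by (rule pc2)
qed

lemma Pbt: "P bt = tp"
  using pc2[of bt tp] B.top_unique by simp

lemma le_PP: "x \<preceq> P (P x)"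
  using pc1 pc2 L.inf.commute by metis

lemma Pjn: "P (a \<curlyvee> b) = P a \<curlywedge> P b"
proof (rule L.order.antisym)
  show "P (a \<curlyvee> b) \<preceq> P a \<curlywedge> P b" using Panti by simp
  have "(a \<curlyvee> b) \<curlywedge> (P a \<curlywedge> P b) = (a \<curlywedge> (P a \<curlywedge> P b)) \<curlyvee> (b \<curlywedge> (P a \<curlywedge> P b))"
    by (rule L.inf_sup_distrib2)
  also have "a \<curlywedge> (P a \<curlywedge> P b) = bt"
  proof -
    have "a \<curlywedge> (P a \<curlywedge> P b) \<preceq> a \<curlywedge> P a" by (intro L.inf_mono) simp_all
    then show ?thesis using pc1 B.bot_unique by metis
  qed
  also have "b \<curlywedge> (P a \<curlywedge> P b) = bt"
  proof -
    have "b \<curlywedge> (P a \<curlywedge> P b) \<preceq> b \<curlywedge> P b" by (intro L.inf_mono) simp_all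
    then show ?thesis using pc1 B.bot_unique by metis
  qed
  finally show "P a \<curlywedge> P b \<preceq> P (a \<curlyvee> b)" by (intro pc2) simp
qed

lemma ax2: "N x \<preceq> x \<curlyvee> P x"
  using ax L.le_sup_iff by blast

lemma ax3: "x \<preceq> N x \<curlyvee> P (N x)"
  using ax2[of "N x"] NN by simp

lemma lemA: "x \<curlywedge> N (P (N x)) \<preceq> N x"
proof -
  have "N (N x \<curlyvee> P (N x)) \<preceq> N x" using Nmono[OF ax3] .
  then show ?thesis by (simp add: Njn NN)
qed

lemma stone: "P x \<curlyvee> P (P x) = tp"
proof -
  have a1: "P x \<curlyvee> N (P x) \<preceq> P x \<curlyvee> P (P x)" by (rule ax)
  have a2: "x \<preceq> P (P x)" by (rule le_PP)
  have a3: "N x \<preceq> x \<curlyvee> P x" by (rule ax2)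
  have "N x \<curlyvee> N (P x) \<preceq> P x \<curlyvee> P (P x)"
  proof (rule L.le_supI)
    have "N x \<preceq> x \<curlyvee> P x" by (rule ax2)
    also have "\<dots> \<preceq> P x \<curlyvee> P (P x)" using a2 by (simp add: L.le_supI1 L.le_supI2 L.le_supI)
    finally show "N x \<preceq> P x \<curlyvee> P (P x)" .
    show "N (P x) \<preceq> P x \<curlyvee> P (P x)" using a1 by (simp add: L.le_sup_iff)
  qed
  moreover have "N x \<curlyvee> N (P x) = tp" using Nmt[of x "P x"] pc1 Nbt by simp
  ultimately show ?thesis using B.top_unique by metis
qed

lemma kl: "x \<curlywedge> N x \<preceq> y \<curlyvee> P y"
proof -
  have "N x \<preceq> N (x \<curlywedge> y)" by (intro Nmono) simp
  also have "\<dots> \<preceq> (x \<curlywedge> y) \<curlyvee> P (x \<curlywedge> y)" by (rule ax2)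
  finally have "x \<curlywedge> N x \<preceq> x \<curlywedge> ((x \<curlywedge> y) \<curlyvee> P (x \<curlywedge> y))" by (intro L.inf_mono) simp_all
  also have "\<dots> = (x \<curlywedge> (x \<curlywedge> y)) \<curlyvee> (x \<curlywedge> P (x \<curlywedge> y))"
    by (rule L.inf_sup_distrib1)
  also have "x \<curlywedge> P (x \<curlywedge> y) \<preceq> P y"
  proof (rule pc2)
    have "y \<curlywedge> (x \<curlywedge> P (x \<curlywedge> y)) = (x \<curlywedge> y) \<curlywedge> P (x \<curlywedge> y)"
      by (metis L.inf.assoc L.inf.commute)
    then show "y \<curlywedge> (x \<curlywedge> P (x \<curlywedge> y)) = bt" using pc1 by simp
  qed
  then have "(x \<curlywedge> (x \<curlywedge> y)) \<curlyvee> (x \<curlywedge> P (x \<curlywedge> y)) \<preceq> y \<curlyvee> P y"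
    by (intro L.sup_mono) simp_all
  finally show ?thesis .
qed

definition D :: "'a \<Rightarrow> 'a" where "D x = x \<curlywedge> P (N x)"

lemma D_le: "D x \<preceq> x" unfolding D_def by simp

lemma key: "D x \<preceq> y \<Longrightarrow> P y \<preceq> P x \<Longrightarrow> x \<preceq> y"
proof -
  assume h1: "D x \<preceq> y" and h2: "P y \<preceq> P x"
  have "x = x \<curlywedge> (N x \<curlyvee> P (N x))" using ax3 L.inf.absorb1 by metis
  also have "\<dots> = (x \<curlywedge> N x) \<curlyvee> D x" by (simp add: D_def L.inf_sup_distrib1)
  finally have xe: "x = (x \<curlywedge> N x) \<curlyvee> D x" .
  have "x \<curlywedge> N x = x \<curlywedge> N x \<curlywedge> (y \<curlyvee> P y)" using kl L.inf.absorb1 by metis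
  also have "\<dots> = (x \<curlywedge> N x \<curlywedge> y) \<curlyvee> (x \<curlywedge> N x \<curlywedge> P y)" by (simp add: L.inf_sup_distrib1)
  also have "x \<curlywedge> N x \<curlywedge> P y = bt"
  proof -
    have "x \<curlywedge> N x \<curlywedge> P y \<preceq> x \<curlywedge> P x" using h2 L.inf_mono by (metis L.inf_le1 L.le_infI L.order_trans L.inf_le2)
    then show ?thesis using pc1 B.bot_unique by metis
  qed
  finally have "x \<curlywedge> N x \<preceq> y" by (metis L.inf_le2 B.sup_bot_right)
  with h1 xe show ?thesis by (metis L.le_sup_iff)
qed

lemma D_mono: "x \<preceq> y \<Longrightarrow> D x \<preceq> D y"
  unfolding D_def using Nmono Panti L.inf_mono by blast

lemma D_mt: "D (x \<curlywedge> y) = D x \<curlywedge> D y"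
  unfolding D_def by (simp add: Nmt Pjn L.inf.assoc L.inf.commute L.inf.left_commute)

lemma D_tp: "D tp = tp"
  unfolding D_def by (simp add: Ntp Pbt)

definition comp :: "'a \<Rightarrow> bool" where "comp c \<longleftrightarrow> c \<curlywedge> N c = bt"

lemma comp_jn1: "comp c \<Longrightarrow> c \<curlyvee> N c = tp"
  unfolding comp_def using Njn NN Nbt L.inf.commute by metis

lemma comp_N: "comp c \<Longrightarrow> comp (N c)"
  unfolding comp_def using NN L.inf.commute by metis

lemma comp_jn: "comp a \<Longrightarrow> comp b \<Longrightarrow> comp (a \<curlyvee> b)"
  unfolding comp_def
proof -
  assume a: "a \<curlywedge> N a = bt" and b: "b \<curlywedge> N b = bt"
  have "(a \<curlyvee> b) \<curlywedge> N (a \<curlyvee> b) = (a \<curlywedge> (N a \<curlywedge> N b)) \<curlyvee> (b \<curlywedge> (N a \<curlywedge> N b))"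
    by (simp add: Njn L.inf_sup_distrib2)
  also have "a \<curlywedge> (N a \<curlywedge> N b) = bt"
  proof -
    have "a \<curlywedge> (N a \<curlywedge> N b) \<preceq> a \<curlywedge> N a" by (intro L.inf_mono) simp_all
    then show ?thesis using a B.bot_unique by metis
  qed
  also have "b \<curlywedge> (N a \<curlywedge> N b) = bt"
  proof -
    have "b \<curlywedge> (N a \<curlywedge> N b) \<preceq> b \<curlywedge> N b" by (intro L.inf_mono) simp_all
    then show ?thesis using b B.bot_unique by metis
  qed
  finally show "(a \<curlyvee> b) \<curlywedge> N (a \<curlyvee> b) = bt" by simp
qed

lemma comp_bt: "comp bt" unfolding comp_def by simp

lemma comp_D: "comp (D x)"
proof -
  have e: "D x \<curlywedge> N (D x) = (x \<curlywedge> P (N x) \<curlywedge> N x) \<curlyvee> (x \<curlywedge> N (P (N x)) \<curlywedge> P (N x))"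
    by (simp add: D_def Nmt L.inf_sup_distrib1 L.inf.assoc L.inf.commute L.inf.left_commute)
  have "x \<curlywedge> P (N x) \<curlywedge> N x = bt"
    using pc1[of "N x"] by (simp add: L.inf.assoc L.inf.left_commute L.inf.commute)
  moreover have "x \<curlywedge> N (P (N x)) \<curlywedge> P (N x) = bt"
  proof -
    have "x \<curlywedge> N (P (N x)) \<curlywedge> P (N x) \<preceq> N x \<curlywedge> P (N x)" using lemA L.inf_mono by blast
    then show ?thesis using pc1 B.bot_unique by metis
  qed
  ultimately show ?thesis using e unfolding comp_def by simp
qed


lemma t_mono: "x \<preceq> y \<Longrightarrow> t x \<preceq> t y"
  by (metis L.le_iff_inf tmt)

lemma tn_mt: "(t ^^ i) (x \<curlywedge> y) = (t ^^ i) x \<curlywedge> (t ^^ i) y"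
  by (induction i) (simp_all add: tmt)
lemma tn_N: "(t ^^ i) (N x) = N ((t ^^ i) x)"
  by (induction i) (simp_all add: tN)
lemma tn_P: "(t ^^ i) (P x) = P ((t ^^ i) x)"
  by (induction i) (simp_all add: tP)
lemma tn_tp: "(t ^^ i) tp = tp"
  by (induction i) (simp_all add: ttp)
lemma t_D: "t (D x) = D (t x)"
  by (simp add: D_def tmt tN tP)

definition fm :: "'a list \<Rightarrow> 'a" where "fm xs = foldr mt xs tp"
definition fj :: "'a list \<Rightarrow> 'a" where "fj xs = foldr jn xs bt"

lemma fm_le: "x \<in> set xs \<Longrightarrow> fm xs \<preceq> x"
  unfolding fm_def by (induction xs) (auto intro: L.le_infI1 L.le_infI2)
lemma le_fm: "(\<And>x. x \<in> set xs \<Longrightarrow> z \<preceq> x) \<Longrightarrow> z \<preceq> fm xs"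
  unfolding fm_def by (induction xs) (auto intro: L.le_infI)
lemma N_fj: "N (fj xs) = fm (map N xs)"
  unfolding fm_def fj_def by (induction xs) (simp_all add: Nbt Njn)
lemma comp_fj: "(\<And>x. x \<in> set xs \<Longrightarrow> comp x) \<Longrightarrow> comp (fj xs)"
  unfolding fj_def by (induction xs) (simp_all add: comp_bt comp_jn)
lemma t_fm: "t (fm xs) = fm (map t xs)"
  unfolding fm_def by (induction xs) (simp_all add: ttp tmt)

definition sig :: "'a \<Rightarrow> 'a" where
  "sig a = fj (map (\<lambda>i. N (D ((t ^^ i) a))) [1..<Suc k])"
definition gg :: "'a \<Rightarrow> 'a" where "gg a = N (sig a)"

lemma gg_eq: "gg a = fm (map (\<lambda>i. D ((t ^^ i) a)) [1..<Suc k])"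
  unfolding gg_def sig_def N_fj by (simp only: map_map o_def NN)

lemma comp_sig: "comp (sig a)"
  unfolding sig_def by (rule comp_fj) (auto intro: comp_N comp_D)

lemma sig_jn_gg: "sig a \<curlyvee> gg a = tp"
  using comp_jn1[OF comp_sig] gg_def by simp
lemma sig_mt_gg: "gg a \<curlywedge> sig a = bt"
  using comp_sig[of a] gg_def comp_def L.inf.commute by metis

lemma kset: "k \<in> set [1..<Suc k]" using k1 by simp

lemma gg_le: "gg a \<preceq> a"
proof -
  have "gg a \<preceq> D ((t ^^ k) a)" unfolding gg_eq by (rule fm_le) (use kset in auto)
  then show ?thesis using tk D_le L.order_trans by metis
qed

lemma gg_mt: "gg (u \<curlywedge> v) = gg u \<curlywedge> gg v"
  unfolding gg_eq
proof (rule L.order.antisym)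
  show "fm (map (\<lambda>i. D ((t ^^ i) (u \<curlywedge> v))) [1..<Suc k]) \<preceq>
    fm (map (\<lambda>i. D ((t ^^ i) u)) [1..<Suc k]) \<curlywedge> fm (map (\<lambda>i. D ((t ^^ i) v)) [1..<Suc k])"
  proof (intro L.le_infI le_fm)
    fix x assume "x \<in> set (map (\<lambda>i. D ((t ^^ i) u)) [1..<Suc k])"
    then obtain i where i: "i \<in> set [1..<Suc k]" "x = D ((t ^^ i) u)" by auto
    have "fm (map (\<lambda>i. D ((t ^^ i) (u \<curlywedge> v))) [1..<Suc k]) \<preceq> D ((t ^^ i) (u \<curlywedge> v))"
      by (rule fm_le) (use i in auto)
    also have "\<dots> \<preceq> x" using i by (simp add: tn_mt D_mt)
    finally show "fm (map (\<lambda>i. D ((t ^^ i) (u \<curlywedge> v))) [1..<Suc k]) \<preceq> x" .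
  next
    fix x assume "x \<in> set (map (\<lambda>i. D ((t ^^ i) v)) [1..<Suc k])"
    then obtain i where i: "i \<in> set [1..<Suc k]" "x = D ((t ^^ i) v)" by auto
    have "fm (map (\<lambda>i. D ((t ^^ i) (u \<curlywedge> v))) [1..<Suc k]) \<preceq> D ((t ^^ i) (u \<curlywedge> v))"
      by (rule fm_le) (use i in auto)
    also have "\<dots> \<preceq> x" using i by (simp add: tn_mt D_mt)
    finally show "fm (map (\<lambda>i. D ((t ^^ i) (u \<curlywedge> v))) [1..<Suc k]) \<preceq> x" .
  qed
  show "fm (map (\<lambda>i. D ((t ^^ i) u)) [1..<Suc k]) \<curlywedge> fm (map (\<lambda>i. D ((t ^^ i) v)) [1..<Suc k])
     \<preceq> fm (map (\<lambda>i. D ((t ^^ i) (u \<curlywedge> v))) [1..<Suc k])"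
  proof (rule le_fm)
    fix x assume "x \<in> set (map (\<lambda>i. D ((t ^^ i) (u \<curlywedge> v))) [1..<Suc k])"
    then obtain i where i: "i \<in> set [1..<Suc k]" "x = D ((t ^^ i) (u \<curlywedge> v))" by auto
    have "fm (map (\<lambda>i. D ((t ^^ i) u)) [1..<Suc k]) \<preceq> D ((t ^^ i) u)"
      by (rule fm_le) (use i in auto)
    moreover have "fm (map (\<lambda>i. D ((t ^^ i) v)) [1..<Suc k]) \<preceq> D ((t ^^ i) v)"
      by (rule fm_le) (use i in auto)
    ultimately have "fm (map (\<lambda>i. D ((t ^^ i) u)) [1..<Suc k]) \<curlywedge> fm (map (\<lambda>i. D ((t ^^ i) v)) [1..<Suc k]) \<preceq> D ((t ^^ i) u) \<curlywedge> D ((t ^^ i) v)"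
      by (rule L.inf_mono)
    with i show "fm (map (\<lambda>i. D ((t ^^ i) u)) [1..<Suc k]) \<curlywedge> fm (map (\<lambda>i. D ((t ^^ i) v)) [1..<Suc k]) \<preceq> x"
      by (simp only: tn_mt D_mt)
  qed
qed

lemma gg_mono: "x \<preceq> y \<Longrightarrow> gg x \<preceq> gg y"
  by (metis L.le_iff_inf gg_mt)

lemma gg_tp: "gg tp = tp"
proof -
  have "tp \<preceq> gg tp" unfolding gg_eq by (rule le_fm) (auto simp: tn_tp D_tp)
  then show ?thesis using B.top_unique by metis
qed

definition good :: "'a \<Rightarrow> bool" where "good b \<longleftrightarrow> comp b \<and> t b = b"

lemma good_N: "good b \<Longrightarrow> good (N b)"
  unfolding good_def using comp_N tN by metis

lemma tSuc: "(t ^^ Suc j) a = t ((t ^^ j) a)" by simp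

lemma t_gg: "t (gg a) = gg a"
proof -
  have e: "t (gg a) = fm (map (\<lambda>i. D ((t ^^ Suc i) a)) [1..<Suc k])"
    unfolding gg_eq t_fm by (simp only: map_map o_def t_D tSuc)
  have tk1: "(t ^^ Suc k) a = (t ^^ 1) a" using tk by simp
  have one: "1 \<in> set [1..<Suc k]" using k1 by auto
  show ?thesis unfolding e
  proof (rule L.order.antisym)
    show "fm (map (\<lambda>i. D ((t ^^ Suc i) a)) [1..<Suc k]) \<preceq> gg a"
      unfolding gg_eq
    proof (rule le_fm)
      fix x assume "x \<in> set (map (\<lambda>i. D ((t ^^ i) a)) [1..<Suc k])"
      then obtain i where i: "1 \<le> i" "i \<le> k" "x = D ((t ^^ i) a)" by auto
      show "fm (map (\<lambda>i. D ((t ^^ Suc i) a)) [1..<Suc k]) \<preceq> x"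
      proof (rule fm_le)
        show "x \<in> set (map (\<lambda>i. D ((t ^^ Suc i) a)) [1..<Suc k])"
        proof (cases "i = 1")
          case True
          show ?thesis unfolding set_map by (rule rev_image_eqI[OF kset]) (simp only: i(3) True tk1)
        next
          case False
          then have m: "i - 1 \<in> set [1..<Suc k]" using i by auto
          have "Suc (i - 1) = i" using i by simp
          then show ?thesis unfolding set_map by (intro rev_image_eqI[OF m]) (simp only: i(3))
        qed
      qed
    qed
    show "gg a \<preceq> fm (map (\<lambda>i. D ((t ^^ Suc i) a)) [1..<Suc k])"
      unfolding gg_eq
    proof (rule le_fm)
      fix x assume "x \<in> set (map (\<lambda>i. D ((t ^^ Suc i) a)) [1..<Suc k])"
      then obtain i where i: "1 \<le> i" "i \<le> k" "x = D ((t ^^ Suc i) a)" by auto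
      show "fm (map (\<lambda>i. D ((t ^^ i) a)) [1..<Suc k]) \<preceq> x"
      proof (rule fm_le)
        show "x \<in> set (map (\<lambda>i. D ((t ^^ i) a)) [1..<Suc k])"
        proof (cases "i = k")
          case True
          show ?thesis unfolding set_map by (rule rev_image_eqI[OF one]) (simp only: i(3) True tk1)
        next
          case False
          then have m: "Suc i \<in> set [1..<Suc k]" using i by auto
          show ?thesis unfolding set_map by (intro rev_image_eqI[OF m]) (simp only: i(3))
        qed
      qed
    qed
  qed
qed

lemma good_gg: "good (gg a)"
  unfolding good_def using comp_N[OF comp_sig] gg_def t_gg by simp

lemma gg_good: "good b \<Longrightarrow> gg b = b"
proof -
  assume g: "good b"
  then have tb: "\<And>i. (t ^^ i) b = b" proof -
    fix i show "(t ^^ i) b = b" using g unfolding good_def by (induction i) simp_all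
  qed
  have Db: "D b = b"
  proof -
    have "N b \<curlywedge> b = bt" using g unfolding good_def comp_def by (metis L.inf.commute)
    then have "b \<preceq> P (N b)" by (rule pc2)
    then show ?thesis unfolding D_def using L.inf.absorb1 by metis
  qed
  have e: "gg b = fm (map (\<lambda>i. b) [1..<Suc k])" unfolding gg_eq tb Db ..
  show ?thesis unfolding e
  proof (rule L.order.antisym)
    show "fm (map (\<lambda>i. b) [1..<Suc k]) \<preceq> b" by (rule fm_le) (use kset in auto)
    show "b \<preceq> fm (map (\<lambda>i. b) [1..<Suc k])" by (rule le_fm) auto
  qed
qed

lemma sig_x: "sig x \<curlyvee> x = tp"
proof -
  have "tp \<preceq> sig x \<curlyvee> x" using sig_jn_gg[of x] gg_le[of x] by (metis L.sup_mono L.order_refl)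
  then show ?thesis using B.top_unique by metis
qed

lemma lat1: "(a \<curlyvee> b) \<curlywedge> (c \<curlyvee> d) \<preceq> a \<curlyvee> (c \<curlyvee> (b \<curlywedge> d))"
proof -
  have "(a \<curlyvee> b) \<curlywedge> (c \<curlyvee> d) = ((a \<curlyvee> b) \<curlywedge> c) \<curlyvee> ((a \<curlyvee> b) \<curlywedge> d)"
    by (rule L.inf_sup_distrib1)
  also have "(a \<curlyvee> b) \<curlywedge> d = (a \<curlywedge> d) \<curlyvee> (b \<curlywedge> d)" by (rule L.inf_sup_distrib2)
  also have "((a \<curlyvee> b) \<curlywedge> c) \<curlyvee> ((a \<curlywedge> d) \<curlyvee> (b \<curlywedge> d)) \<preceq> a \<curlyvee> (c \<curlyvee> (b \<curlywedge> d))"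
  proof (intro L.le_supI)
    show "(a \<curlyvee> b) \<curlywedge> c \<preceq> a \<curlyvee> (c \<curlyvee> (b \<curlywedge> d))"
      by (meson L.inf_le2 L.le_supI1 L.le_supI2)
    show "a \<curlywedge> d \<preceq> a \<curlyvee> (c \<curlyvee> (b \<curlywedge> d))"
      by (meson L.inf_le1 L.le_supI1)
    show "b \<curlywedge> d \<preceq> a \<curlyvee> (c \<curlyvee> (b \<curlywedge> d))"
      by (meson L.order_refl L.le_supI2)
  qed
  finally show ?thesis .
qed

lemma sig_meet: "sig x \<curlyvee> (sig y \<curlyvee> (x \<curlywedge> y)) = tp"
proof -
  have "tp = (sig x \<curlyvee> x) \<curlywedge> (sig y \<curlyvee> y)" using sig_x by simp
  also have "\<dots> \<preceq> sig x \<curlyvee> (sig y \<curlyvee> (x \<curlywedge> y))" by (rule lat1)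
  finally show ?thesis using B.top_unique by metis
qed

definition cds :: "'a set \<Rightarrow> bool" where
  "cds S \<longleftrightarrow> tp \<in> S \<and> (\<forall>x y. x \<in> S \<longrightarrow> sig x \<curlyvee> y \<in> S \<longrightarrow> y \<in> S)"

definition filt :: "'a set \<Rightarrow> bool" where
  "filt S \<longleftrightarrow> tp \<in> S \<and> (\<forall>x y. x \<in> S \<longrightarrow> x \<preceq> y \<longrightarrow> y \<in> S)
     \<and> (\<forall>x y. x \<in> S \<longrightarrow> y \<in> S \<longrightarrow> x \<curlywedge> y \<in> S) \<and> (\<forall>x. x \<in> S \<longrightarrow> gg x \<in> S)"

lemma cds_filt: "cds S \<longleftrightarrow> filt S"
proof
  assume c: "cds S"
  then have tpS: "tp \<in> S" and mp: "\<And>x y. x \<in> S \<Longrightarrow> sig x \<curlyvee> y \<in> S \<Longrightarrow> y \<in> S"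
    unfolding cds_def by blast+
  have up: "\<And>x y. x \<in> S \<Longrightarrow> x \<preceq> y \<Longrightarrow> y \<in> S"
  proof -
    fix x y assume "x \<in> S" "x \<preceq> y"
    have "sig x \<curlyvee> x \<preceq> sig x \<curlyvee> y" by (rule L.sup_mono) (simp_all add: \<open>x \<preceq> y\<close>)
    then have "sig x \<curlyvee> y = tp" using sig_x[of x] B.top_unique by simp
    then show "y \<in> S" using mp[OF \<open>x \<in> S\<close>] tpS by simp
  qed
  have mt: "\<And>x y. x \<in> S \<Longrightarrow> y \<in> S \<Longrightarrow> x \<curlywedge> y \<in> S"
  proof -
    fix x y assume x: "x \<in> S" and y: "y \<in> S"
    have "sig y \<curlyvee> (x \<curlywedge> y) \<in> S" by (rule mp[OF x]) (simp add: sig_meet tpS)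
    then show "x \<curlywedge> y \<in> S" by (rule mp[OF y])
  qed
  have gS: "\<And>x. x \<in> S \<Longrightarrow> gg x \<in> S"
  proof -
    fix x assume x: "x \<in> S"
    show "gg x \<in> S" by (rule mp[OF x]) (simp add: sig_jn_gg tpS)
  qed
  show "filt S" unfolding filt_def using tpS up mt gS by blast
next
  assume f: "filt S"
  then have tpS: "tp \<in> S" and up: "\<And>x y. x \<in> S \<Longrightarrow> x \<preceq> y \<Longrightarrow> y \<in> S"
    and mt: "\<And>x y. x \<in> S \<Longrightarrow> y \<in> S \<Longrightarrow> x \<curlywedge> y \<in> S" and gS: "\<And>x. x \<in> S \<Longrightarrow> gg x \<in> S"
    unfolding filt_def by blast+
  have "\<And>x y. x \<in> S \<Longrightarrow> sig x \<curlyvee> y \<in> S \<Longrightarrow> y \<in> S"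
  proof -
    fix x y assume "x \<in> S" "sig x \<curlyvee> y \<in> S"
    then have "gg x \<curlywedge> (sig x \<curlyvee> y) \<in> S" using gS mt by blast
    moreover have "gg x \<curlywedge> (sig x \<curlyvee> y) = gg x \<curlywedge> y"
      using sig_mt_gg[of x] by (simp add: L.inf_sup_distrib1)
    ultimately have "gg x \<curlywedge> y \<in> S" by simp
    then show "y \<in> S" using up L.inf_le2 by blast
  qed
  then show "cds S" unfolding cds_def using tpS by blast
qed

definition maxc :: "'a set \<Rightarrow> bool" where
  "maxc M \<longleftrightarrow> cds M \<and> M \<noteq> UNIV \<and> (\<forall>S. cds S \<and> S \<noteq> UNIV \<and> M \<subseteq> S \<longrightarrow> S = M)"

lemma exist_max:
  assumes dS: "cds S0" and aS: "a \<notin> S0"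
  shows "\<exists>M. maxc M \<and> S0 \<subseteq> M \<and> a \<notin> M"
proof -
  define A where "A = {E. filt E \<and> S0 \<subseteq> E \<and> a \<notin> E}"
  have "\<forall>C\<in>chains A. \<exists>U\<in>A. \<forall>X\<in>C. X \<subseteq> U"
  proof
    fix C assume C: "C \<in> chains A"
    show "\<exists>U\<in>A. \<forall>X\<in>C. X \<subseteq> U"
    proof (cases "C = {}")
      case True
      then show ?thesis using dS aS cds_filt unfolding A_def by auto
    next
      case False
      have CA: "C \<subseteq> A" and ch: "\<And>X Y. X \<in> C \<Longrightarrow> Y \<in> C \<Longrightarrow> X \<subseteq> Y \<or> Y \<subseteq> X"
        using C unfolding chains_def chain_subset_def by auto
      have fC: "\<And>X. X \<in> C \<Longrightarrow> filt X" using CA unfolding A_def by auto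
      have "filt (\<Union>C)"
        unfolding filt_def
      proof (intro conjI allI impI)
        obtain X where "X \<in> C" using False by auto
        then show "tp \<in> \<Union>C" using fC unfolding filt_def by blast
      next
        fix x y assume "x \<in> \<Union>C" "x \<preceq> y"
        then show "y \<in> \<Union>C" using fC unfolding filt_def by blast
      next
        fix x y assume x: "x \<in> \<Union>C" and y: "y \<in> \<Union>C"
        then obtain X Y where XY: "X \<in> C" "Y \<in> C" "x \<in> X" "y \<in> Y" by auto
        then show "x \<curlywedge> y \<in> \<Union>C"
        proof (cases "X \<subseteq> Y")
          case True then show ?thesis using XY fC unfolding filt_def by blast
        next
          case False then have "Y \<subseteq> X" using ch XY by blast
          then show ?thesis using XY fC unfolding filt_def by blast
        qed
      next
        fix x assume "x \<in> \<Union>C"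
        then show "gg x \<in> \<Union>C" using fC unfolding filt_def by blast
      qed
      moreover have "S0 \<subseteq> \<Union>C" "a \<notin> \<Union>C" using CA False unfolding A_def by auto
      ultimately show ?thesis unfolding A_def by blast
    qed
  qed
  from Zorn_Lemma2[OF this] obtain M where MA: "M \<in> A" and Mmax: "\<And>X. X \<in> A \<Longrightarrow> M \<subseteq> X \<Longrightarrow> X = M"
    by blast
  have fM: "filt M" and S0M: "S0 \<subseteq> M" and aM: "a \<notin> M" using MA unfolding A_def by auto
  have tpM: "tp \<in> M" and upM: "\<And>x y. x \<in> M \<Longrightarrow> x \<preceq> y \<Longrightarrow> y \<in> M"
    and mtM: "\<And>x y. x \<in> M \<Longrightarrow> y \<in> M \<Longrightarrow> x \<curlywedge> y \<in> M" and gM: "\<And>x. x \<in> M \<Longrightarrow> gg x \<in> M"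
    using fM unfolding filt_def by blast+
  define E where "E b = {y. \<exists>m\<in>M. m \<curlywedge> b \<preceq> y}" for b
  have filtE: "filt (E b)" if gb: "good b" for b
    unfolding filt_def E_def
  proof (intro conjI allI impI)
    show "tp \<in> {y. \<exists>m\<in>M. m \<curlywedge> b \<preceq> y}" using tpM by auto
  next
    fix x y assume "x \<in> {y. \<exists>m\<in>M. m \<curlywedge> b \<preceq> y}" "x \<preceq> y"
    then show "y \<in> {y. \<exists>m\<in>M. m \<curlywedge> b \<preceq> y}" using L.order_trans by blast
  next
    fix x y assume "x \<in> {y. \<exists>m\<in>M. m \<curlywedge> b \<preceq> y}" "y \<in> {y. \<exists>m\<in>M. m \<curlywedge> b \<preceq> y}"
    then obtain m m' where mm: "m \<in> M" "m' \<in> M" "m \<curlywedge> b \<preceq> x" "m' \<curlywedge> b \<preceq> y" by auto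
    have "(m \<curlywedge> m') \<curlywedge> b \<preceq> x \<curlywedge> y"
      using mm by (meson L.inf_le1 L.inf_le2 L.le_inf_iff L.order_trans)
    then show "x \<curlywedge> y \<in> {y. \<exists>m\<in>M. m \<curlywedge> b \<preceq> y}" using mm mtM by blast
  next
    fix x assume "x \<in> {y. \<exists>m\<in>M. m \<curlywedge> b \<preceq> y}"
    then obtain m where m: "m \<in> M" "m \<curlywedge> b \<preceq> x" by auto
    have "gg (m \<curlywedge> b) \<preceq> gg x" using m gg_mono by blast
    moreover have "gg (m \<curlywedge> b) = gg m \<curlywedge> b" using gg_mt gg_good gb by simp
    ultimately show "gg x \<in> {y. \<exists>m\<in>M. m \<curlywedge> b \<preceq> y}" using m gM by auto
  qed
  have ME: "M \<subseteq> E b" for b unfolding E_def using L.inf_le1 by blast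
  have bE: "b \<in> E b" for b unfolding E_def using tpM by auto
  have aE: "a \<in> E b" if gb: "good b" and bM: "b \<notin> M" for b
  proof (rule ccontr)
    assume "a \<notin> E b"
    then have "E b \<in> A" using filtE[OF gb] S0M ME unfolding A_def by blast
    then have "E b = M" using Mmax ME by blast
    then show False using bE bM by blast
  qed
  have prime: "b \<in> M \<or> N b \<in> M" if gb: "good b" for b
  proof (rule ccontr)
    assume "\<not> (b \<in> M \<or> N b \<in> M)"
    then have "a \<in> E b" "a \<in> E (N b)" using aE gb good_N by auto
    then obtain m m' where mm: "m \<in> M" "m' \<in> M" "m \<curlywedge> b \<preceq> a" "m' \<curlywedge> N b \<preceq> a"
      unfolding E_def by auto
    have "m \<curlywedge> m' = (m \<curlywedge> m') \<curlywedge> (b \<curlyvee> N b)"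
      using comp_jn1 gb unfolding good_def by simp
    also have "\<dots> = ((m \<curlywedge> m') \<curlywedge> b) \<curlyvee> ((m \<curlywedge> m') \<curlywedge> N b)" by (rule L.inf_sup_distrib1)
    also have "\<dots> \<preceq> a"
      using mm by (meson L.inf_le1 L.inf_le2 L.le_inf_iff L.order_trans L.le_supI)
    finally have "m \<curlywedge> m' \<preceq> a" .
    then show False using mm mtM upM aM by blast
  qed
  have "maxc M"
    unfolding maxc_def
  proof (intro conjI allI impI)
    show "cds M" using fM cds_filt by simp
    show "M \<noteq> UNIV" using aM by auto
    fix S assume S: "cds S \<and> S \<noteq> UNIV \<and> M \<subseteq> S"
    then have fS: "filt S" using cds_filt by simp
    show "S = M"
    proof (rule ccontr)
      assume "S \<noteq> M"
      then obtain x where x: "x \<in> S" "x \<notin> M" using S by blast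
      have bS: "gg x \<in> S" using fS x unfolding filt_def by blast
      have bM: "gg x \<notin> M" using x upM gg_le by blast
      then have "N (gg x) \<in> M" using prime good_gg by blast
      then have "N (gg x) \<in> S" using S by blast
      then have "gg x \<curlywedge> N (gg x) \<in> S" using bS fS unfolding filt_def by blast
      then have "bt \<in> S" using good_gg unfolding good_def comp_def by simp
      then have "S = UNIV" using fS B.bot_least unfolding filt_def by blast
      then show False using S by blast
    qed
  qed
  then show ?thesis using S0M aM by blast
qed

lemma part1: "cds S \<Longrightarrow> \<exists>MM. (\<forall>M\<in>MM. maxc M) \<and> S = \<Inter>MM"
proof -
  assume S: "cds S"
  let ?MM = "{M. maxc M \<and> S \<subseteq> M}"
  have "S = \<Inter>?MM"
  proof
    show "S \<subseteq> \<Inter>?MM" by blast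
    show "\<Inter>?MM \<subseteq> S"
    proof
      fix a assume a: "a \<in> \<Inter>?MM"
      show "a \<in> S"
      proof (rule ccontr)
        assume "a \<notin> S"
        then obtain M where "maxc M" "S \<subseteq> M" "a \<notin> M" using exist_max S by blast
        then show False using a by blast
      qed
    qed
  qed
  then show ?thesis by (intro exI[of _ ?MM]) blast
qed

lemma cds_one: "cds {tp}"
  unfolding cds_filt filt_def
proof (intro conjI allI impI)
  show "tp \<in> {tp}" by simp
  fix x y assume "x \<in> {tp}" "x \<preceq> y" then show "y \<in> {tp}" using B.top_unique by simp
next
  fix x y assume "x \<in> {tp}" "y \<in> {tp}" then show "x \<curlywedge> y \<in> {tp}" by simp
next
  fix x assume "x \<in> {tp}" then show "gg x \<in> {tp}" using gg_tp by simp
qed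

lemma part2: "\<Inter>{M. maxc M} = {tp}"
proof
  show "{tp} \<subseteq> \<Inter>{M. maxc M}" unfolding maxc_def cds_def by blast
  show "\<Inter>{M. maxc M} \<subseteq> {tp}"
  proof
    fix a assume a: "a \<in> \<Inter>{M. maxc M}"
    show "a \<in> {tp}"
    proof (rule ccontr)
      assume "a \<notin> {tp}"
      then obtain M where "maxc M" "a \<notin> M" using exist_max[OF cds_one] by blast
      then show False using a by blast
    qed
  qed
qed

definition cong :: "('a \<times> 'a) set \<Rightarrow> bool" where
  "cong \<theta> \<longleftrightarrow> equiv UNIV \<theta> \<and>
     (\<forall>x y u v. (x, y) \<in> \<theta> \<longrightarrow> (u, v) \<in> \<theta> \<longrightarrow>
        (x \<curlywedge> u, y \<curlywedge> v) \<in> \<theta> \<and> (x \<curlyvee> u, y \<curlyvee> v) \<in> \<theta>) \<and>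
     (\<forall>x y. (x, y) \<in> \<theta> \<longrightarrow>
        (N x, N y) \<in> \<theta> \<and> (P x, P y) \<in> \<theta> \<and> (t x, t y) \<in> \<theta>)"

lemma cong_refl: "cong \<theta> \<Longrightarrow> (x, x) \<in> \<theta>"
  unfolding cong_def equiv_def refl_on_def by blast
lemma cong_sym: "cong \<theta> \<Longrightarrow> (x, y) \<in> \<theta> \<Longrightarrow> (y, x) \<in> \<theta>"
  unfolding cong_def equiv_def sym_def by blast
lemma cong_trans: "cong \<theta> \<Longrightarrow> (x, y) \<in> \<theta> \<Longrightarrow> (y, z) \<in> \<theta> \<Longrightarrow> (x, z) \<in> \<theta>"
  unfolding cong_def equiv_def trans_def by blast
lemma cong_mt: "cong \<theta> \<Longrightarrow> (x, y) \<in> \<theta> \<Longrightarrow> (u, v) \<in> \<theta> \<Longrightarrow> (x \<curlywedge> u, y \<curlywedge> v) \<in> \<theta>"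
  unfolding cong_def by blast
lemma cong_jn: "cong \<theta> \<Longrightarrow> (x, y) \<in> \<theta> \<Longrightarrow> (u, v) \<in> \<theta> \<Longrightarrow> (x \<curlyvee> u, y \<curlyvee> v) \<in> \<theta>"
  unfolding cong_def by blast
lemma cong_N: "cong \<theta> \<Longrightarrow> (x, y) \<in> \<theta> \<Longrightarrow> (N x, N y) \<in> \<theta>"
  unfolding cong_def by blast
lemma cong_P: "cong \<theta> \<Longrightarrow> (x, y) \<in> \<theta> \<Longrightarrow> (P x, P y) \<in> \<theta>"
  unfolding cong_def by blast
lemma cong_t: "cong \<theta> \<Longrightarrow> (x, y) \<in> \<theta> \<Longrightarrow> (t x, t y) \<in> \<theta>"
  unfolding cong_def by blast
lemma cong_tn: "cong \<theta> \<Longrightarrow> (x, y) \<in> \<theta> \<Longrightarrow> ((t ^^ i) x, (t ^^ i) y) \<in> \<theta>"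
  by (induction i) (simp_all add: cong_t)
lemma cong_D: "cong \<theta> \<Longrightarrow> (x, y) \<in> \<theta> \<Longrightarrow> (D x, D y) \<in> \<theta>"
  unfolding D_def by (intro cong_mt cong_P cong_N) 
lemma cong_fm: "cong \<theta> \<Longrightarrow> (\<And>i. i \<in> set L \<Longrightarrow> (f i, g i) \<in> \<theta>) \<Longrightarrow> (fm (map f L), fm (map g L)) \<in> \<theta>"
  unfolding fm_def by (induction L) (simp_all add: cong_refl cong_mt)
lemma cong_gg: "cong \<theta> \<Longrightarrow> (x, y) \<in> \<theta> \<Longrightarrow> (gg x, gg y) \<in> \<theta>"
  unfolding gg_eq by (intro cong_fm cong_D cong_tn)

definition ee :: "'a \<Rightarrow> 'a \<Rightarrow> 'a" where
  "ee x y = (N (D x) \<curlyvee> y) \<curlywedge> (N (D y) \<curlyvee> x) \<curlywedge> (P x \<curlyvee> P (P y)) \<curlywedge> (P y \<curlyvee> P (P x))"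

lemma cong_ee: "cong \<theta> \<Longrightarrow> (x, y) \<in> \<theta> \<Longrightarrow> (ee x y, ee x x) \<in> \<theta>"
proof -
  assume c: "cong \<theta>" and h: "(x, y) \<in> \<theta>"
  have s: "(y, x) \<in> \<theta>" by (rule cong_sym[OF c h])
  show ?thesis unfolding ee_def by (intro cong_mt cong_jn cong_N cong_P cong_D cong_refl c h s)
qed

lemma NDx: "N (D x) \<curlyvee> x = tp"
proof -
  have "D x \<curlyvee> N (D x) = tp" using comp_jn1[OF comp_D] .
  then have "tp \<preceq> x \<curlyvee> N (D x)" using D_le by (metis L.sup_mono L.order_refl)
  then show ?thesis using B.top_unique L.sup.commute by metis
qed

lemma ee_refl: "ee x x = tp"
  unfolding ee_def by (simp add: NDx stone)

lemma leD: "N (D x) \<curlyvee> y = tp \<Longrightarrow> D x \<preceq> y"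
proof -
  assume h: "N (D x) \<curlyvee> y = tp"
  have "D x = D x \<curlywedge> (N (D x) \<curlyvee> y)" using h by simp
  also have "\<dots> = (D x \<curlywedge> N (D x)) \<curlyvee> (D x \<curlywedge> y)" by (rule L.inf_sup_distrib1)
  also have "\<dots> = D x \<curlywedge> y" using comp_D unfolding comp_def by simp
  finally show ?thesis using L.inf_le2 by metis
qed

lemma leP: "P x \<curlyvee> P (P y) = tp \<Longrightarrow> P y \<preceq> P x"
proof -
  assume h: "P x \<curlyvee> P (P y) = tp"
  have "P y = P y \<curlywedge> (P x \<curlyvee> P (P y))" using h by simp
  also have "\<dots> = (P y \<curlywedge> P x) \<curlyvee> (P y \<curlywedge> P (P y))" by (rule L.inf_sup_distrib1)
  also have "\<dots> = P y \<curlywedge> P x" using pc1 by simp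
  finally show ?thesis using L.inf_le2 by metis
qed

lemma ee_eq: "ee x y = tp \<Longrightarrow> x = y"
proof -
  assume "ee x y = tp"
  then have h: "N (D x) \<curlyvee> y = tp" "N (D y) \<curlyvee> x = tp" "P x \<curlyvee> P (P y) = tp" "P y \<curlyvee> P (P x) = tp"
    unfolding ee_def by (simp_all add: B.inf_eq_top_iff)
  have "x \<preceq> y" using key leD leP h by blast
  moreover have "y \<preceq> x" using key leD leP h by blast
  ultimately show ?thesis by (rule L.order.antisym)
qed

definition thM :: "'a set \<Rightarrow> ('a \<times> 'a) set" where
  "thM S = {(x, y). \<exists>d\<in>S. x \<curlywedge> d = y \<curlywedge> d}"

lemma N_b: "comp b \<Longrightarrow> N x \<curlywedge> b = N (x \<curlywedge> b) \<curlywedge> b"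
proof -
  assume c: "comp b"
  have "N (x \<curlywedge> b) \<curlywedge> b = (N x \<curlywedge> b) \<curlyvee> (N b \<curlywedge> b)" by (simp add: Nmt L.inf_sup_distrib2)
  also have "N b \<curlywedge> b = bt" using c unfolding comp_def by (metis L.inf.commute)
  finally show ?thesis by simp
qed

lemma P_b: "P x \<curlywedge> b = P (x \<curlywedge> b) \<curlywedge> b"
proof (rule L.order.antisym)
  show "P x \<curlywedge> b \<preceq> P (x \<curlywedge> b) \<curlywedge> b" by (intro L.inf_mono Panti) simp_all
  have "P (x \<curlywedge> b) \<curlywedge> b \<preceq> P x"
  proof (rule pc2)
    have "x \<curlywedge> (P (x \<curlywedge> b) \<curlywedge> b) = (x \<curlywedge> b) \<curlywedge> P (x \<curlywedge> b)"
      by (simp add: L.inf.assoc L.inf.commute L.inf.left_commute)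
    then show "x \<curlywedge> (P (x \<curlywedge> b) \<curlywedge> b) = bt" using pc1 by simp
  qed
  then show "P (x \<curlywedge> b) \<curlywedge> b \<preceq> P x \<curlywedge> b" by simp
qed

lemma cong_thM: "cds S \<Longrightarrow> cong (thM S)"
proof -
  assume "cds S"
  then have fS: "filt S" using cds_filt by simp
  have tpS: "tp \<in> S" and mtS: "\<And>x y. x \<in> S \<Longrightarrow> y \<in> S \<Longrightarrow> x \<curlywedge> y \<in> S" and gS: "\<And>x. x \<in> S \<Longrightarrow> gg x \<in> S"
    using fS unfolding filt_def by blast+
  have un: "\<exists>b\<in>S. good b \<and> x \<curlywedge> b = y \<curlywedge> b" if h: "(x, y) \<in> thM S" for x y
  proof -
    obtain d where d: "d \<in> S" "x \<curlywedge> d = y \<curlywedge> d" using h unfolding thM_def by blast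
    let ?b = "gg d"
    have bd: "?b = d \<curlywedge> ?b" using gg_le L.inf.absorb2 by metis
    have "x \<curlywedge> ?b = (x \<curlywedge> d) \<curlywedge> ?b" using bd by (metis L.inf.assoc)
    also have "\<dots> = (y \<curlywedge> d) \<curlywedge> ?b" using d by simp
    also have "\<dots> = y \<curlywedge> ?b" using bd by (metis L.inf.assoc)
    finally show ?thesis using d gS good_gg by blast
  qed
  show "cong (thM S)" unfolding cong_def
  proof (intro conjI allI impI)
    show "equiv UNIV (thM S)"
    proof (rule equivI)
      show "refl (thM S)" unfolding refl_on_def thM_def using tpS by blast
      show "sym (thM S)" unfolding sym_def thM_def by (auto intro: sym)
      show "trans (thM S)" unfolding trans_def thM_def
      proof (intro allI impI)
        fix x y z assume "(x, y) \<in> {(x, y). \<exists>d\<in>S. x \<curlywedge> d = y \<curlywedge> d}" "(y, z) \<in> {(x, y). \<exists>d\<in>S. x \<curlywedge> d = y \<curlywedge> d}"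
        then obtain d e where de: "d \<in> S" "e \<in> S" "x \<curlywedge> d = y \<curlywedge> d" "y \<curlywedge> e = z \<curlywedge> e" by blast
        have "x \<curlywedge> (d \<curlywedge> e) = (x \<curlywedge> d) \<curlywedge> e" by (simp add: L.inf.assoc)
        also have "\<dots> = (y \<curlywedge> e) \<curlywedge> d" using de by (simp add: L.inf.assoc L.inf.commute L.inf.left_commute)
        also have "\<dots> = (z \<curlywedge> e) \<curlywedge> d" using de by simp
        also have "\<dots> = z \<curlywedge> (d \<curlywedge> e)" by (simp add: L.inf.assoc L.inf.commute L.inf.left_commute)
        finally show "(x, z) \<in> {(x, y). \<exists>d\<in>S. x \<curlywedge> d = y \<curlywedge> d}" using de mtS by blast
      qed
    qed simp
  next
    fix x y u v assume "(x, y) \<in> thM S" "(u, v) \<in> thM S"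
    then obtain d e where de: "d \<in> S" "e \<in> S" "x \<curlywedge> d = y \<curlywedge> d" "u \<curlywedge> e = v \<curlywedge> e" unfolding thM_def by blast
    have "(x \<curlywedge> u) \<curlywedge> (d \<curlywedge> e) = (x \<curlywedge> d) \<curlywedge> (u \<curlywedge> e)" by (simp add: L.inf.assoc L.inf.commute L.inf.left_commute)
    also have "\<dots> = (y \<curlywedge> d) \<curlywedge> (v \<curlywedge> e)" using de by simp
    also have "\<dots> = (y \<curlywedge> v) \<curlywedge> (d \<curlywedge> e)" by (simp add: L.inf.assoc L.inf.commute L.inf.left_commute)
    finally show "(x \<curlywedge> u, y \<curlywedge> v) \<in> thM S" unfolding thM_def using de mtS by blast
    have "(x \<curlyvee> u) \<curlywedge> (d \<curlywedge> e) = ((x \<curlywedge> d) \<curlywedge> e) \<curlyvee> ((u \<curlywedge> e) \<curlywedge> d)"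
      by (simp add: L.inf_sup_distrib1 L.inf_sup_distrib2 L.inf.assoc L.inf.commute L.inf.left_commute)
    also have "\<dots> = ((y \<curlywedge> d) \<curlywedge> e) \<curlyvee> ((v \<curlywedge> e) \<curlywedge> d)" using de by simp
    also have "\<dots> = (y \<curlyvee> v) \<curlywedge> (d \<curlywedge> e)"
      by (simp add: L.inf_sup_distrib1 L.inf_sup_distrib2 L.inf.assoc L.inf.commute L.inf.left_commute)
    finally show "(x \<curlyvee> u, y \<curlyvee> v) \<in> thM S" unfolding thM_def using de mtS by blast
  next
    fix x y assume "(x, y) \<in> thM S"
    then obtain b where b: "b \<in> S" "good b" "x \<curlywedge> b = y \<curlywedge> b" using un by blast
    have cb: "comp b" and tb: "t b = b" using b unfolding good_def by auto
    have "N x \<curlywedge> b = N y \<curlywedge> b" using N_b[OF cb, of x] N_b[OF cb, of y] b by simp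
    then show "(N x, N y) \<in> thM S" unfolding thM_def using b by blast
    have "P x \<curlywedge> b = P y \<curlywedge> b" using P_b[of x b] P_b[of y b] b by simp
    then show "(P x, P y) \<in> thM S" unfolding thM_def using b by blast
    have "t x \<curlywedge> b = t y \<curlywedge> b" using tmt[of x b] tmt[of y b] tb b by metis
    then show "(t x, t y) \<in> thM S" unfolding thM_def using b by blast
  qed
qed

definition Dth :: "('a \<times> 'a) set \<Rightarrow> 'a set" where "Dth \<theta> = {x. (x, tp) \<in> \<theta>}"

lemma cds_Dth: "cong \<theta> \<Longrightarrow> cds (Dth \<theta>)"
  unfolding cds_filt filt_def Dth_def
proof (intro conjI allI impI)
  assume c: "cong \<theta>"
  show "tp \<in> {x. (x, tp) \<in> \<theta>}" using cong_refl[OF c] by simp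
  fix x y assume xh: "x \<in> {x. (x, tp) \<in> \<theta>}" and "x \<preceq> y"
  have "(y \<curlyvee> x, y \<curlyvee> tp) \<in> \<theta>" using cong_jn[OF c cong_refl[OF c] xh[simplified]] .
  moreover have "y \<curlyvee> x = y" using \<open>x \<preceq> y\<close> L.sup_absorb1 by metis
  ultimately show "y \<in> {x. (x, tp) \<in> \<theta>}" by simp
next
  assume c: "cong \<theta>"
  fix x y assume "x \<in> {x. (x, tp) \<in> \<theta>}" "y \<in> {x. (x, tp) \<in> \<theta>}"
  then have "(x \<curlywedge> y, tp \<curlywedge> tp) \<in> \<theta>" using cong_mt[OF c] by blast
  then show "x \<curlywedge> y \<in> {x. (x, tp) \<in> \<theta>}" by simp
next
  assume c: "cong \<theta>"
  fix x assume "x \<in> {x. (x, tp) \<in> \<theta>}"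
  then have "(gg x, gg tp) \<in> \<theta>" using cong_gg[OF c] by blast
  then show "gg x \<in> {x. (x, tp) \<in> \<theta>}" using gg_tp by simp
qed

lemma Dth_UNIV: "cong \<theta> \<Longrightarrow> Dth \<theta> = UNIV \<Longrightarrow> \<theta> = UNIV"
proof -
  assume c: "cong \<theta>" and D: "Dth \<theta> = UNIV"
  then have bt1: "(bt, tp) \<in> \<theta>" unfolding Dth_def by blast
  have z: "(bt, x) \<in> \<theta>" for x
    using cong_mt[OF c cong_refl[OF c, of x] bt1] by simp
  show ?thesis
  proof (rule set_eqI)
    fix p :: "'a \<times> 'a"
    obtain x y where p: "p = (x, y)" by (cases p)
    have "(x, y) \<in> \<theta>" using cong_trans[OF c cong_sym[OF c z] z] .
    then show "p \<in> \<theta> \<longleftrightarrow> p \<in> UNIV" using p by simp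
  qed
qed

lemma part3:
  assumes si: "\<Inter>{\<theta>. cong \<theta> \<and> \<theta> \<noteq> Id} \<noteq> Id"
  shows "\<forall>\<theta>. cong \<theta> \<longrightarrow> \<theta> = Id \<or> \<theta> = UNIV"
proof (intro allI impI)
  fix \<theta> assume c: "cong \<theta>"
  show "\<theta> = Id \<or> \<theta> = UNIV"
  proof (cases "\<theta> = Id")
    case True then show ?thesis by simp
  next
    case False
    let ?mu = "\<Inter>{\<theta>. cong \<theta> \<and> \<theta> \<noteq> Id}"
    have "Id \<subseteq> ?mu"
    proof
      fix z :: "'a \<times> 'a" assume "z \<in> Id"
      then obtain a where za: "z = (a, a)" by (rule IdE)
      show "z \<in> ?mu"
      proof
        fix th assume "th \<in> {\<theta>. cong \<theta> \<and> \<theta> \<noteq> Id}"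
        then have "cong th" by simp
        then show "z \<in> th" using cong_refl za by simp
      qed
    qed
    then have "\<not> ?mu \<subseteq> Id" using si by (metis subset_antisym)
    then obtain z where z: "z \<in> ?mu" "z \<notin> Id" by blast
    obtain p q where zpq: "z = (p, q)" by (cases z)
    have pq: "(p, q) \<in> ?mu" "p \<noteq> q" using z zpq by simp_all
    have "ee p q \<noteq> tp" using ee_eq pq by blast
    then obtain M where M: "maxc M" "ee p q \<notin> M" using exist_max[OF cds_one, of "ee p q"] by blast
    have cM: "cong (thM M)" using cong_thM M unfolding maxc_def by blast
    have "thM M = Id"
    proof (rule ccontr)
      assume "thM M \<noteq> Id"
      then have "(p, q) \<in> thM M" using pq cM by blast
      then have "(ee p q, ee p p) \<in> thM M" using cong_ee cM by blast
      then have "(ee p q, tp) \<in> thM M" by (simp only: ee_refl)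
      then obtain d where d: "d \<in> M" "ee p q \<curlywedge> d = tp \<curlywedge> d" unfolding thM_def by blast
      have e: "ee p q \<curlywedge> d = d" using d(2) by simp
      have "d \<preceq> ee p q" using L.inf_le1[of "ee p q" d] e by simp
      have fM: "filt M" using M(1) cds_filt unfolding maxc_def by blast
      then have "\<forall>x y. x \<in> M \<longrightarrow> x \<preceq> y \<longrightarrow> y \<in> M" unfolding filt_def by blast
      then have "ee p q \<in> M" using d(1) \<open>d \<preceq> ee p q\<close> by blast
      then show False using M by blast
    qed
    then have "M \<subseteq> {tp}"
    proof -
      assume thId: "thM M = Id"
      show "M \<subseteq> {tp}"
      proof
        fix d assume dM: "d \<in> M"
        have "d \<curlywedge> d = tp \<curlywedge> d" by simp
        then have "(d, tp) \<in> thM M" unfolding thM_def using dM by blast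
        then show "d \<in> {tp}" using thId by simp
      qed
    qed
    then have Mtp: "M = {tp}" using M unfolding maxc_def cds_def by blast
    have cD: "cds (Dth \<theta>)" using cds_Dth c by blast
    have "Dth \<theta> = UNIV"
    proof (rule ccontr)
      assume nU: "Dth \<theta> \<noteq> UNIV"
      have "tp \<in> Dth \<theta>" using cD unfolding cds_def by blast
      have mx: "\<forall>S. cds S \<and> S \<noteq> UNIV \<and> M \<subseteq> S \<longrightarrow> S = M" using M(1) unfolding maxc_def by blast
      have "M \<subseteq> Dth \<theta>" using Mtp \<open>tp \<in> Dth \<theta>\<close> by simp
      then have Dt: "Dth \<theta> = {tp}" using mx[rule_format, of "Dth \<theta>"] Mtp nU cD by blast
      have "Id \<subseteq> \<theta>"
      proof
        fix z :: "'a \<times> 'a" assume "z \<in> Id"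
        then obtain a where "z = (a, a)" by (rule IdE)
        then show "z \<in> \<theta>" using cong_refl[OF c, of a] by simp
      qed
      then have "\<not> \<theta> \<subseteq> Id" using False by (metis subset_antisym)
      then obtain z where z: "z \<in> \<theta>" "z \<notin> Id" by blast
      obtain x y where zxy: "z = (x, y)" by (cases z)
      have xy: "(x, y) \<in> \<theta>" "x \<noteq> y" using z zxy by simp_all
      have "(ee x y, ee x x) \<in> \<theta>" using cong_ee c xy by blast
      then have "(ee x y, tp) \<in> \<theta>" by (simp only: ee_refl)
      then have "ee x y \<in> Dth \<theta>" unfolding Dth_def by simp
      then have "ee x y = tp" using Dt by blast
      then show False using ee_eq xy by blast
    qed
    then show ?thesis using Dth_UNIV c by blast
  qed
qed
end

lemma bdl_lat:
  assumes b: "bdl A"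
  shows "class.distrib_lattice (meet A) (leq A) (\<lambda>x y. leq A x y \<and> x \<noteq> y) (join A)"
    and "class.bounded_lattice (meet A) (leq A) (\<lambda>x y. leq A x y \<and> x \<noteq> y) (join A) (zero A) (one A)"
proof -
  have mA: "\<And>x y z. meet A (meet A x y) z = meet A x (meet A y z)"
   and jA: "\<And>x y z. join A (join A x y) z = join A x (join A y z)"
   and mC: "\<And>x y. meet A x y = meet A y x"
   and jC: "\<And>x y. join A x y = join A y x"
   and ab1: "\<And>x y. meet A x (join A x y) = x"
   and ab2: "\<And>x y. join A x (meet A x y) = x"
   and dis: "\<And>x y z. meet A x (join A y z) = join A (meet A x y) (meet A x z)"
   and j0: "\<And>x. join A x (zero A) = x"
   and m1: "\<And>x. meet A x (one A) = x"
    using b unfolding bdl_def by blast+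
  have mI: "meet A x x = x" for x
  proof -
    have "meet A x (join A x (meet A x x)) = x" by (rule ab1)
    then show ?thesis by (simp only: ab2)
  qed
  have refl: "\<And>x. leq A x x" unfolding leq_def using mI by simp
  have trans: "leq A x z" if h1: "leq A x y" and h2: "leq A y z" for x y z
  proof -
    have "meet A x z = meet A (meet A x y) z" using h1 unfolding leq_def by simp
    also have "\<dots> = meet A x (meet A y z)" by (rule mA)
    also have "\<dots> = x" using h1 h2 unfolding leq_def by simp
    finally show ?thesis unfolding leq_def .
  qed
  have anti: "x = y" if h1: "leq A x y" and h2: "leq A y x" for x y
  proof -
    have "x = meet A x y" using h1 unfolding leq_def by simp
    also have "\<dots> = meet A y x" by (rule mC)
    also have "\<dots> = y" using h2 unfolding leq_def by simp
    finally show ?thesis .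
  qed
  have i1: "leq A (meet A x y) x" for x y
  proof -
    have "meet A (meet A x y) x = meet A x (meet A x y)" by (rule mC)
    also have "\<dots> = meet A (meet A x x) y" by (simp only: mA)
    also have "\<dots> = meet A x y" by (simp only: mI)
    finally show ?thesis unfolding leq_def .
  qed
  have i2: "leq A (meet A x y) y" for x y
  proof -
    have "meet A (meet A x y) y = meet A x (meet A y y)" by (rule mA)
    then show ?thesis unfolding leq_def by (simp only: mI)
  qed
  have ig: "leq A x (meet A y z)" if h1: "leq A x y" and h2: "leq A x z" for x y z
  proof -
    have "meet A x (meet A y z) = meet A (meet A x y) z" by (simp only: mA)
    also have "\<dots> = x" using h1 h2 unfolding leq_def by simp
    finally show ?thesis unfolding leq_def .
  qed
  have s1: "\<And>x y. leq A x (join A x y)" unfolding leq_def using ab1 by simp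
  have s2: "leq A y (join A x y)" for x y
  proof -
    have "meet A y (join A x y) = meet A y (join A y x)" by (simp only: jC)
    then show ?thesis unfolding leq_def by (simp only: ab1)
  qed
  have sl: "leq A (join A y z) x" if h1: "leq A y x" and h2: "leq A z x" for x y z
  proof -
    have e1: "meet A x y = y" using h1 unfolding leq_def by (simp only: mC)
    have e2: "meet A x z = z" using h2 unfolding leq_def by (simp only: mC)
    have "meet A (join A y z) x = meet A x (join A y z)" by (rule mC)
    also have "\<dots> = join A (meet A x y) (meet A x z)" by (rule dis)
    also have "\<dots> = join A y z" by (simp only: e1 e2)
    finally show ?thesis unfolding leq_def .
  qed
  have sd: "join A x (meet A y z) = meet A (join A x y) (join A x z)" for x y z
  proof -
    have "meet A (join A x y) (join A x z) = join A (meet A (join A x y) x) (meet A (join A x y) z)"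
      by (rule dis)
    also have "meet A (join A x y) x = x" by (simp only: mC ab1)
    also have "meet A (join A x y) z = join A (meet A z x) (meet A z y)"
      by (simp only: mC[of "join A x y" z] dis)
    also have "join A x (join A (meet A z x) (meet A z y)) = join A (join A x (meet A x z)) (meet A y z)"
      by (simp only: jA mC[of z x] mC[of z y])
    also have "join A x (meet A x z) = x" by (rule ab2)
    finally show ?thesis by simp
  qed
  have bot: "leq A (zero A) x" for x
  proof -
    have "meet A (zero A) (join A (zero A) x) = zero A" by (rule ab1)
    moreover have "join A (zero A) x = x" using j0[of x] by (simp only: jC)
    ultimately show ?thesis unfolding leq_def by simp
  qed
  have top: "\<And>x. leq A x (one A)" unfolding leq_def using m1 by simp
  have lt: "\<And>x y. (leq A x y \<and> x \<noteq> y) = (leq A x y \<and> \<not> leq A y x)" using anti by blast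
  show "class.distrib_lattice (meet A) (leq A) (\<lambda>x y. leq A x y \<and> x \<noteq> y) (join A)"
    by unfold_locales (fact lt refl trans anti i1 i2 ig s1 s2 sl sd)+
  show "class.bounded_lattice (meet A) (leq A) (\<lambda>x y. leq A x y \<and> x \<noteq> y) (join A) (zero A) (one A)"
    by unfold_locales (fact lt refl trans anti i1 i2 ig s1 s2 sl sd bot top)+
qed

theorem lemma3p3:
  fixes k :: nat and A :: "'a ck_algebra"
  assumes "k \<ge> 1" and "Ck_alg k A"
  shows "(\<forall>D. cyclic_ds k A D \<longrightarrow>
            (\<exists>\<M>. (\<forall>M\<in>\<M>. maximal_cyclic_ds k A M) \<and> D = \<Inter>\<M>))
       \<and> \<Inter>{M. maximal_cyclic_ds k A M} = {one A}
       \<and> (subdirectly_irreducible A \<longrightarrow> simple_alg A)"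
proof -
  have mp: "mpM_alg A" and au: "mpM_automorphism A (tr A)" and tk: "(tr A ^^ k) = id"
    using assms(2) unfolding Ck_alg_def by blast+
  have dm: "de_morgan_alg A" and pcA: "is_pseudocomplement A"
    and axA: "\<And>x. leq A (join A x (neg A x)) (join A x (pc A x))"
    using mp unfolding mpM_alg_def by blast+
  have b: "bdl A" and NN: "\<And>x. neg A (neg A x) = x"
    and Nj: "\<And>x y. neg A (join A x y) = meet A (neg A x) (neg A y)"
    using dm unfolding de_morgan_alg_def by blast+
  have pc1: "\<And>x. meet A x (pc A x) = zero A"
    and pc2: "\<And>x y. meet A x y = zero A \<Longrightarrow> leq A y (pc A x)"
    using pcA unfolding is_pseudocomplement_def by blast+
  have tmt: "\<And>x y. tr A (meet A x y) = meet A (tr A x) (tr A y)"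
    and tjn: "\<And>x y. tr A (join A x y) = join A (tr A x) (tr A y)"
    and tN: "\<And>x. tr A (neg A x) = neg A (tr A x)"
    and tP: "\<And>x. tr A (pc A x) = pc A (tr A x)"
    and tb: "tr A (zero A) = zero A" and tt: "tr A (one A) = one A"
    using au unfolding mpM_automorphism_def by blast+
  have tkx: "\<And>x. (tr A ^^ k) x = x" using tk by simp
  interpret M: mpm "meet A" "leq A" "\<lambda>x y. leq A x y \<and> x \<noteq> y" "join A" "zero A" "one A"
      "neg A" "pc A" "tr A" k
    unfolding mpm_def mpm_axioms_def
    using bdl_lat[OF b] NN Nj pc1 pc2 axA tmt tjn tN tP tb tt tkx assms(1) by blast
  have cimp_eq: "cimp k A x y = join A (M.sig x) y" for x y
    unfolding cimp_def M.sig_def M.fj_def bigjoin_def nabla_def M.D_def by (simp add: NN)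
  have cds_eq: "cyclic_ds k A S \<longleftrightarrow> M.cds S" for S
    unfolding cyclic_ds_def M.cds_def cimp_eq ..
  have max_eq: "maximal_cyclic_ds k A S \<longleftrightarrow> M.maxc S" for S
    unfolding maximal_cyclic_ds_def M.maxc_def cds_eq ..
  have cong_eq: "congruence A \<theta> \<longleftrightarrow> M.cong \<theta>" for \<theta>
    unfolding congruence_def M.cong_def ..
  show ?thesis
  proof (intro conjI)
    show "\<forall>D. cyclic_ds k A D \<longrightarrow> (\<exists>\<M>. (\<forall>M\<in>\<M>. maximal_cyclic_ds k A M) \<and> D = \<Inter>\<M>)"
      unfolding cds_eq max_eq using M.part1 by blast
    show "\<Inter>{M. maximal_cyclic_ds k A M} = {one A}"
      unfolding max_eq using M.part2 .
    show "subdirectly_irreducible A \<longrightarrow> simple_alg A"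
    proof
      assume si: "subdirectly_irreducible A"
      then have nt: "nontrivial_alg A" and mu: "\<Inter>{\<theta>. M.cong \<theta> \<and> \<theta> \<noteq> Id} \<noteq> Id"
        unfolding subdirectly_irreducible_def cong_eq by blast+
      show "simple_alg A" unfolding simple_alg_def cong_eq using nt M.part3[OF mu] by blast
    qed
  qed
qed

end
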